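(* Let $t\ge1$ be an integer. The affine transformation $(x,y)\mapsto(x+H_t,\ y+x+H_t/2)$ maps the lattice $\Lambda_t=(\tfrac t2+\mathbb Z)\times\mathbb Z$ onto itself, maps the grid parabola $P_t$ onto itself, and maps the reference parabola $\Pi_t\colon y=x^2/(2H_t)$, as well as every vertical translate of $\Pi_t$, onto itself.
   Context: Fix an integer $t\ge1$. Let $S_t$ be the set of rational numbers $s$ which, written in lowest terms as $s=a/b$ with $a\in\mathbb Z$ and $b$ a positive integer, satisfy $b\le t$. For $s=a/b\in S_t$ let $v_s=\lfloor t/b\rfloor\,(b,a)$, and $V_t=\{v_s:s\in S_t\}$. The grid parabola $P_t$ is the infinite convex polygonal chain obtained by concatenating the vectors of $V_t$ in order of increasing slope, positioned so that the edge given by $(t,0)$ goes from $(-t/2,0)$ to $(t/2,0)$. $H_t=\sum_{1\le y\le x\le t,\ \gcd(x,y)=1}\lfloor t/x\rfloor\,x$. *)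

theory Defs
  imports "HOL-Analysis.Analysis"
begin

definition S :: "nat \<Rightarrow> rat set" where
  "S t = {s. snd (quotient_of s) \<le> int t}"

definition vvec :: "nat \<Rightarrow> rat \<Rightarrow> real \<times> real" where
  "vvec t s = (let (a, b) = quotient_of s; m = int t div b
               in (of_int (m * b), of_int (m * a)))"

text \<open>Right endpoint of the edge of slope s in the grid parabola: the chain is
  obtained by concatenating the edge vectors in order of increasing slope, with the
  edge of slope 0 (the vector (t,0)) going from (-t/2,0) to (t/2,0).\<close>
definition vertex :: "nat \<Rightarrow> rat \<Rightarrow> real \<times> real" where
  "vertex t s =
     (if 0 \<le> s then (- real t / 2, 0) + (\<Sum>s'\<in>{s'\<in>S t. 0 \<le> s' \<and> s' \<le> s}. vvec t s')
      else (- real t / 2, 0) - (\<Sum>s'\<in>{s'\<in>S t. s < s' \<and> s' < 0}. vvec t s'))"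

definition grid_parabola :: "nat \<Rightarrow> (real \<times> real) set" where
  "grid_parabola t = (\<Union>s\<in>S t. closed_segment (vertex t s - vvec t s) (vertex t s))"

definition H :: "nat \<Rightarrow> nat" where
  "H t = (\<Sum>(x, y)\<in>{(x, y). 1 \<le> y \<and> y \<le> x \<and> x \<le> t \<and> coprime x y}. (t div x) * x)"

definition lattice :: "nat \<Rightarrow> (real \<times> real) set" where
  "lattice t = {(x, y). x - real t / 2 \<in> \<int> \<and> y \<in> \<int>}"

definition Tmap :: "nat \<Rightarrow> real \<times> real \<Rightarrow> real \<times> real" where
  "Tmap t = (\<lambda>(x, y). (x + real (H t), y + x + real (H t) / 2))"

definition ref_parabola :: "nat \<Rightarrow> real \<Rightarrow> (real \<times> real) set" where
  "ref_parabola t c = {(x, y). y = x ^ 2 / (2 * real (H t)) + c}"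

end

theory Submission
  imports Defs
begin


definition WW :: "nat \<Rightarrow> (int \<Rightarrow> int) \<Rightarrow> int \<Rightarrow> int" where
  "WW b w c = (\<Sum>a\<in>{0..c}. if coprime a (int b) then w a else 0)
             - (\<Sum>a\<in>{c+1..-1}. if coprime a (int b) then w a else 0)"

lemma WW_step: "WW b w (c+1) = WW b w c + (if coprime (c+1) (int b) then w (c+1) else 0)"
proof (cases "c \<ge> 0")
  case True
  have "{0..c+1} = insert (c+1) {0..c}" using True by auto
  moreover have "{c+1+1..-1} = {}" "{c+1..-1} = {}" using True by auto
  ultimately show ?thesis unfolding WW_def by simp
next
  case False
  show ?thesis
  proof (cases "c = -1")
    case True then show ?thesis unfolding WW_def by simp
  next
    case F2: False
    have "{c+1..-1} = insert (c+1) {c+1+1..-1}" using False F2 by auto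
    moreover have "{0..c+1} = {}" "{0..c} = {}" using False F2 by auto
    ultimately show ?thesis unfolding WW_def by simp
  qed
qed

lemma const_int: assumes "\<And>c::int. f (c+1) = f c" shows "f c = f 0"
proof (induction c rule: int_induct[where k=0])
  case base then show ?case by simp
next
  case (step1 i) then show ?case using assms[of i] by simp
next
  case (step2 i) then show ?case using assms[of "i-1"] by simp
qed

lemma coprime_shift: "coprime (a + int b) (int b) \<longleftrightarrow> coprime a (int b)"
  by (simp add: coprime_iff_gcd_eq_1)


lemma WW_G: "WW b (\<lambda>_. 1) (c + int b) - WW b (\<lambda>_. 1) c = WW b (\<lambda>_. 1) (int b) - WW b (\<lambda>_. 1) 0"
proof -
  have "(\<lambda>c. WW b (\<lambda>_. 1) (c + int b) - WW b (\<lambda>_. 1) c) c = (\<lambda>c. WW b (\<lambda>_. 1) (c + int b) - WW b (\<lambda>_. 1) c) 0"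
  proof (rule const_int)
    fix c :: int
    have "WW b (\<lambda>_. 1) (c + 1 + int b) = WW b (\<lambda>_. 1) (c + int b) + (if coprime (c + int b + 1) (int b) then 1 else 0)"
      using WW_step[of b "\<lambda>_. 1" "c + int b"] by (simp add: ac_simps)
    moreover have "coprime (c + int b + 1) (int b) = coprime (c+1) (int b)"
      using coprime_shift[of "c+1" b] by (simp add: ac_simps)
    ultimately show "WW b (\<lambda>_. 1) (c + 1 + int b) - WW b (\<lambda>_. 1) (c + 1) = WW b (\<lambda>_. 1) (c + int b) - WW b (\<lambda>_. 1) c"
      using WW_step[of b "\<lambda>_. 1" c] by simp
  qed
  then show ?thesis by simp
qed

lemma WW_F: "WW b id (c + int b) - WW b id c - int b * WW b (\<lambda>_. 1) c = WW b id (int b) - WW b id 0 - int b * WW b (\<lambda>_. 1) 0"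
proof -
  let ?f = "\<lambda>c. WW b id (c + int b) - WW b id c - int b * WW b (\<lambda>_. 1) c"
  have "?f c = ?f 0"
  proof (rule const_int)
    fix c :: int
    have "WW b id (c + 1 + int b) = WW b id (c + int b) + (if coprime (c + int b + 1) (int b) then c + int b + 1 else 0)"
      using WW_step[of b id "c + int b"] by (simp add: ac_simps)
    moreover have "coprime (c + int b + 1) (int b) = coprime (c+1) (int b)"
      using coprime_shift[of "c+1" b] by (simp add: ac_simps)
    ultimately show "?f (c+1) = ?f c"
      using WW_step[of b id c] WW_step[of b "\<lambda>_. 1" c] by (simp add: algebra_simps)
  qed
  then show ?thesis by simp
qed

lemma WW_nonneg: "c \<ge> 0 \<Longrightarrow> WW b w c = (\<Sum>a\<in>{0..c}. if coprime a (int b) then w a else 0)"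
  unfolding WW_def by simp

lemma coprime0: "coprime 0 (int b) \<longleftrightarrow> b = 1"
  by simp

lemma pairing: "2 * WW b id (int b) = int b * WW b (\<lambda>_. 1) (int b)"
proof -
  let ?B = "int b"
  let ?f = "\<lambda>a. if coprime a ?B then a else 0"
  have r: "(\<Sum>a\<in>{0..?B}. ?f a) = (\<Sum>a\<in>{0..?B}. ?f (?B - a))"
    by (rule sum.reindex_bij_witness[where i="\<lambda>a. ?B - a" and j="\<lambda>a. ?B - a"]) auto
  have c: "\<And>a. coprime (?B - a) ?B = coprime a ?B"
    by (metis coprime_minus_left_iff coprime_shift diff_conv_add_uminus add.commute)
  have "2 * (\<Sum>a\<in>{0..?B}. ?f a) = (\<Sum>a\<in>{0..?B}. ?f a + ?f (?B - a))"
    using r by (simp add: sum.distrib)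
  also have "\<dots> = (\<Sum>a\<in>{0..?B}. ?B * (if coprime a ?B then 1 else 0))"
    by (rule sum.cong) (auto simp: c)
  finally show ?thesis by (simp add: WW_nonneg sum_distrib_left id_def)
qed

lemma quot_ab: "coprime a (int b) \<Longrightarrow> b > 0 \<Longrightarrow> quotient_of (of_int a / of_nat b) = (a, int b)"
proof -
  assume "coprime a (int b)" "b > 0"
  then have "quotient_of (Fract a (int b)) = (a, int b)" by (simp add: quotient_of_Fract)
  then show ?thesis by (simp add: Fract_of_int_quotient)
qed

lemma sum_S:
  assumes fin: "\<And>b. b \<in> {1..t} \<Longrightarrow> finite {a::int. coprime a (int b) \<and> P (of_int a / of_nat b)}"
  shows "(\<Sum>s\<in>{s\<in>S t. P s}. f s) = (\<Sum>b\<in>{1..t}. \<Sum>a\<in>{a::int. coprime a (int b) \<and> P (of_int a / of_nat b)}. f (of_int a / of_nat b))"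
proof -
  let ?A = "\<lambda>b. {a::int. coprime a (int b) \<and> P (of_int a / of_nat b)}"
  let ?h = "\<lambda>(b::nat, a::int). (of_int a / of_nat b :: rat)"
  have inj: "inj_on ?h (Sigma {1..t} ?A)"
  proof (rule inj_onI)
    fix x y assume x: "x \<in> Sigma {1..t} ?A" and y: "y \<in> Sigma {1..t} ?A" and e0: "?h x = ?h y"
    obtain b a where xa: "x = (b, a)" by fastforce
    obtain b' a' where ya: "y = (b', a')" by fastforce
    have "b \<in> {1..t}" "a \<in> ?A b" "b' \<in> {1..t}" "a' \<in> ?A b'" using x y xa ya by auto
    have e: "(of_int a / of_nat b :: rat) = of_int a' / of_nat b'" using e0 xa ya by simp
    have "quotient_of (of_int a / of_nat b :: rat) = (a, int b)"
      using \<open>b \<in> {1..t}\<close> \<open>a \<in> ?A b\<close> by (intro quot_ab) auto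
    moreover have "quotient_of (of_int a' / of_nat b' :: rat) = (a', int b')"
      using \<open>b' \<in> {1..t}\<close> \<open>a' \<in> ?A b'\<close> by (intro quot_ab) auto
    ultimately have "(a, int b) = (a', int b')" using e by metis
    then show "x = y" using xa ya by simp
  qed
  have img: "{s\<in>S t. P s} = ?h ` (Sigma {1..t} ?A)"
  proof
    show "{s\<in>S t. P s} \<subseteq> ?h ` (Sigma {1..t} ?A)"
    proof clarify
      fix s assume s: "s \<in> S t" "P s"
      obtain a d where q: "quotient_of s = (a, d)" by fastforce
      have d: "d > 0" "coprime a d" using q quotient_of_denom_pos quotient_of_coprime by auto
      have sd: "s = of_int a / of_int d" using quotient_of_div[OF q] .
      have "d \<le> int t" using s(1) q unfolding S_def by simp
      then have "nat d \<in> {1..t}" using d by auto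
      moreover have "s = ?h (nat d, a)" using sd d by simp
      moreover have "a \<in> ?A (nat d)" using d s sd by simp
      ultimately show "s \<in> ?h ` (Sigma {1..t} ?A)" by blast
    qed
    show "?h ` (Sigma {1..t} ?A) \<subseteq> {s\<in>S t. P s}"
    proof (rule subsetI)
      fix x assume "x \<in> ?h ` (Sigma {1..t} ?A)"
      then obtain b a where ba: "b \<in> {1..t}" "a \<in> ?A b" "x = ?h (b, a)" by blast
      then have "quotient_of x = (a, int b)" by (simp add: quot_ab)
      then show "x \<in> {s\<in>S t. P s}" using ba by (auto simp: S_def)
    qed
  qed
  have "(\<Sum>s\<in>{s\<in>S t. P s}. f s) = (\<Sum>x\<in>Sigma {1..t} ?A. f (?h x))"
    unfolding img by (rule sum.reindex[OF inj, unfolded comp_def])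
  also have "\<dots> = (\<Sum>b\<in>{1..t}. \<Sum>a\<in>?A b. f (?h (b,a)))"
  proof -
    have "(\<Sum>b\<in>{1..t}. \<Sum>a\<in>?A b. f (?h (b,a))) = (\<Sum>(b,a)\<in>Sigma {1..t} ?A. f (?h (b,a)))"
      by (rule sum.Sigma) (use fin in auto)
    moreover have "(\<Sum>(b,a)\<in>Sigma {1..t} ?A. f (?h (b,a))) = (\<Sum>x\<in>Sigma {1..t} ?A. f (?h x))"
      by (rule sum.cong) auto
    ultimately show ?thesis by simp
  qed
  finally show ?thesis by simp
qed



definition cb :: "nat \<Rightarrow> rat \<Rightarrow> int" where "cb b s = \<lfloor>s * of_nat b\<rfloor>"

lemma vvec_ab: "coprime a (int b) \<Longrightarrow> b > 0 \<Longrightarrow>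
  vvec t (of_int a / of_nat b) = (of_int (int (t div b) * int b), of_int (int (t div b) * a))"
  by (simp add: vvec_def quot_ab zdiv_int Let_def)

lemma le_iff_floor: "b > 0 \<Longrightarrow> (of_int a / of_nat b \<le> s) \<longleftrightarrow> a \<le> cb b s"
  unfolding cb_def by (simp add: le_floor_iff pos_divide_le_eq)

lemma less_iff_floor: "b > 0 \<Longrightarrow> (s < of_int a / of_nat b) \<longleftrightarrow> cb b s < a"
  unfolding cb_def by (simp add: floor_less_iff pos_less_divide_eq)

lemma inner_sum:
  assumes "b > 0" "finite X"
  shows "(\<Sum>a\<in>{a\<in>X. coprime a (int b)}. vvec t (of_int a / of_nat b)) =
    (of_int (int (t div b) * int b * (\<Sum>a\<in>X. if coprime a (int b) then 1 else 0)),
     of_int (int (t div b) * (\<Sum>a\<in>X. if coprime a (int b) then a else 0)))"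
proof -
  have "(\<Sum>a\<in>{a\<in>X. coprime a (int b)}. vvec t (of_int a / of_nat b)) =
        (\<Sum>a\<in>{a\<in>X. coprime a (int b)}. (of_int (int (t div b) * int b), of_int (int (t div b) * a)) :: real \<times> real)"
    by (rule sum.cong) (auto simp: vvec_ab assms)
  also have "\<dots> = (\<Sum>a\<in>X. if coprime a (int b) then (of_int (int (t div b) * int b), of_int (int (t div b) * a)) else 0)"
    by (rule sum.inter_filter) (rule assms)
  finally show ?thesis
    by (simp add: prod_eq_iff fst_sum snd_sum if_distrib sum_distrib_left of_int_sum cong: if_cong)
qed

lemma nonneg_iff: "b > 0 \<Longrightarrow> (0 \<le> (of_int x / of_nat b :: rat)) \<longleftrightarrow> 0 \<le> x"
  by (simp add: zero_le_divide_iff)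
lemma neg_iff: "b > 0 \<Longrightarrow> ((of_int x / of_nat b :: rat) < 0) \<longleftrightarrow> x < 0"
  by (simp add: divide_less_0_iff)

definition VX :: "nat \<Rightarrow> rat \<Rightarrow> real" where
  "VX t s = - real t / 2 + (\<Sum>b\<in>{1..t}. of_int (int (t div b) * int b * WW b (\<lambda>_. 1) (cb b s)))"
definition VY :: "nat \<Rightarrow> rat \<Rightarrow> real" where
  "VY t s = (\<Sum>b\<in>{1..t}. of_int (int (t div b) * WW b id (cb b s)))"

lemma sum_pairs: "(\<Sum>b\<in>A. ((f b, g b) :: real \<times> real)) = (\<Sum>b\<in>A. f b, \<Sum>b\<in>A. g b)"
  by (simp add: prod_eq_iff fst_sum snd_sum)

lemma vertex_eq: "vertex t s = (VX t s, VY t s)"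
proof (cases "0 \<le> s")
  case True
  have sets: "\<And>b. b \<in> {1..t} \<Longrightarrow> {a::int. coprime a (int b) \<and> ((0::rat) \<le> of_int a / of_nat b \<and> of_int a / of_nat b \<le> s)}
      = {a\<in>{0..cb b s}. coprime a (int b)}"
    using le_iff_floor nonneg_iff by (auto simp: )
  have cpos: "\<And>b. cb b s \<ge> 0" using True unfolding cb_def by simp
  have "(\<Sum>s'\<in>{s'\<in>S t. 0 \<le> s' \<and> s' \<le> s}. vvec t s') =
     (\<Sum>b\<in>{1..t}. \<Sum>a\<in>{a\<in>{0..cb b s}. coprime a (int b)}. vvec t (of_int a / of_nat b))"
    by (subst sum_S) (auto simp: sets intro: finite_subset[of _ "{0..cb _ s}"])
  also have "\<dots> = (\<Sum>b\<in>{1..t}. (of_int (int (t div b) * int b * WW b (\<lambda>_. 1) (cb b s)),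
                                 of_int (int (t div b) * WW b id (cb b s))))"
    by (rule sum.cong[OF refl], subst inner_sum) (auto simp: WW_nonneg cpos id_def)
  finally show ?thesis using True unfolding vertex_def VX_def VY_def by (simp add: sum_pairs)
next
  case False
  have sets: "\<And>b. b \<in> {1..t} \<Longrightarrow> {a::int. coprime a (int b) \<and> (s < of_int a / of_nat b \<and> of_int a / of_nat b < (0::rat))}
      = {a\<in>{cb b s + 1..-1}. coprime a (int b)}"
    using less_iff_floor neg_iff by (auto simp: )
  have cneg: "\<And>b. b \<ge> 1 \<Longrightarrow> cb b s < 0" using False unfolding cb_def
    by (simp add: floor_less_iff mult_neg_pos)
  have WWn: "\<And>b w. b \<ge> 1 \<Longrightarrow> WW b w (cb b s) = - (\<Sum>a\<in>{cb b s + 1..-1}. if coprime a (int b) then w a else 0)"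
    using cneg unfolding WW_def by simp
  have "(\<Sum>s'\<in>{s'\<in>S t. s < s' \<and> s' < 0}. vvec t s') =
     (\<Sum>b\<in>{1..t}. \<Sum>a\<in>{a\<in>{cb b s + 1..-1}. coprime a (int b)}. vvec t (of_int a / of_nat b))"
    by (subst sum_S) (auto simp: sets intro: finite_subset[of _ "{cb _ s + 1..-1}"])
  also have "\<dots> = (\<Sum>b\<in>{1..t}. - (of_int (int (t div b) * int b * WW b (\<lambda>_. 1) (cb b s)),
                                 of_int (int (t div b) * WW b id (cb b s))))"
    by (rule sum.cong[OF refl], subst inner_sum) (auto simp: WWn id_def)
  finally show ?thesis using False unfolding vertex_def VX_def VY_def
    by (simp add: sum_pairs sum_negf)
qed

lemma cb_shift: "cb b (s + 1) = cb b s + int b"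
  unfolding cb_def by (simp add: distrib_right)

definition Kc :: "nat \<Rightarrow> int" where "Kc b = (\<Sum>a\<in>{1..int b}. if coprime a (int b) then 1 else 0)"

lemma card_K: "int (card {y\<in>{1..x}. coprime x y}) = Kc x"
proof -
  have "{a\<in>{1..int x}. coprime a (int x)} = int ` {y\<in>{1..x}. coprime x y}"
  proof
    show "{a\<in>{1..int x}. coprime a (int x)} \<subseteq> int ` {y\<in>{1..x}. coprime x y}"
    proof
      fix a assume a: "a \<in> {a\<in>{1..int x}. coprime a (int x)}"
      then have "a = int (nat a)" by simp
      moreover have "coprime (int (nat a)) (int x)" using a by (simp del: coprime_int_iff)
      then have "coprime (nat a) x" by (simp only: coprime_int_iff)
      then have "nat a \<in> {y\<in>{1..x}. coprime x y}" using a
        by (auto simp: coprime_commute)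
      ultimately show "a \<in> int ` {y\<in>{1..x}. coprime x y}" by blast
    qed
    show "int ` {y\<in>{1..x}. coprime x y} \<subseteq> {a\<in>{1..int x}. coprime a (int x)}"
      by (auto simp: coprime_commute)
  qed
  then have "card {a\<in>{1..int x}. coprime a (int x)} = card {y\<in>{1..x}. coprime x y}"
    by (simp add: card_image)
  moreover have "int (card {a\<in>{1..int x}. coprime a (int x)}) = Kc x"
    unfolding Kc_def by (simp add: sum.inter_filter[symmetric])
  ultimately show ?thesis by simp
qed

lemma H_int: "int (H t) = (\<Sum>b\<in>{1..t}. int (t div b) * int b * Kc b)"
proof -
  have set: "{(x, y). 1 \<le> y \<and> y \<le> x \<and> x \<le> t \<and> coprime x y} = Sigma {1..t} (\<lambda>x. {y\<in>{1..x}. coprime x y})"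
    by auto
  have "H t = (\<Sum>(x,y)\<in>Sigma {1..t} (\<lambda>x. {y\<in>{1..x}. coprime x y}). (t div x) * x)"
    unfolding H_def set ..
  also have "\<dots> = (\<Sum>x\<in>{1..t}. \<Sum>y\<in>{y\<in>{1..x}. coprime x y}. (t div x) * x)"
    by (rule sum.Sigma[symmetric]) auto
  also have "\<dots> = (\<Sum>x\<in>{1..t}. (t div x) * x * card {y\<in>{1..x}. coprime x y})"
    by (simp add: mult.commute)
  finally have "int (H t) = (\<Sum>x\<in>{1..t}. int (t div x) * int x * int (card {y\<in>{1..x}. coprime x y}))"
    by simp
  then show ?thesis by (simp only: card_K)
qed

lemma WW1_b: "b \<ge> 1 \<Longrightarrow> WW b (\<lambda>_. 1) (int b) = (if b = 1 then 1 else 0) + Kc b"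
proof -
  assume b: "b \<ge> 1"
  have "{0..int b} = insert 0 {1..int b}" using b by auto
  then show ?thesis using b unfolding Kc_def by (simp add: WW_nonneg)
qed

lemma WW_0: "WW b w 0 = (if b = 1 then w 0 else 0)"
  by (simp add: WW_nonneg)

lemma sum_ind1: "(t::nat) \<ge> 1 \<Longrightarrow> (\<Sum>b\<in>{1..t}. (f b::int) * (if b = 1 then 1 else 0)) = f 1"
proof -
  assume "t \<ge> 1"
  then have "(\<Sum>b\<in>{1..t}. (f b::int) * (if b = 1 then 1 else 0)) = (\<Sum>b\<in>{1..t}. if b = 1 then f b else 0)"
    by (intro sum.cong) auto
  also have "\<dots> = f 1" using \<open>t \<ge> 1\<close> by (subst sum.delta) auto
  finally show ?thesis .
qed

definition Q :: "nat \<Rightarrow> int" where "Q t = (\<Sum>b\<in>{1..t}. int (t div b) * WW b id (int b))"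

lemma two_Q: "t \<ge> 1 \<Longrightarrow> 2 * Q t = int (H t) + int t"
proof -
  assume t: "t \<ge> 1"
  have "2 * Q t = (\<Sum>b\<in>{1..t}. int (t div b) * (int b * WW b (\<lambda>_. 1) (int b)))"
    unfolding Q_def sum_distrib_left by (intro sum.cong) (auto simp: pairing[symmetric] ac_simps)
  also have "\<dots> = (\<Sum>b\<in>{1..t}. int (t div b) * int b * Kc b + int (t div b) * int b * (if b = 1 then 1 else 0))"
    by (intro sum.cong) (auto simp: WW1_b algebra_simps)
  also have "\<dots> = int (H t) + int t"
    by (simp only: sum.distrib H_int sum_ind1[OF t]) simp
  finally show ?thesis .
qed

lemma VX_shift: "t \<ge> 1 \<Longrightarrow> VX t (s + 1) = VX t s + real (H t)"
proof -
  assume t: "t \<ge> 1"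
  have "(\<Sum>b\<in>{1..t}. real_of_int (int (t div b) * int b * WW b (\<lambda>_. 1) (cb b (s+1))))
     = (\<Sum>b\<in>{1..t}. real_of_int (int (t div b) * int b * WW b (\<lambda>_. 1) (cb b s)) + real_of_int (int (t div b) * int b * Kc b))"
  proof (intro sum.cong refl)
    fix b assume b: "b \<in> {1..t}"
    have "WW b (\<lambda>_. 1) (cb b s + int b) = WW b (\<lambda>_. 1) (cb b s) + Kc b"
      using WW_G[of b "cb b s"] WW1_b[of b] WW_0[of b] b by auto
    then have "WW b (\<lambda>_. 1) (cb b (s+1)) = WW b (\<lambda>_. 1) (cb b s) + Kc b"
      by (simp only: cb_shift)
    then show "real_of_int (int (t div b) * int b * WW b (\<lambda>_. 1) (cb b (s+1))) =
      real_of_int (int (t div b) * int b * WW b (\<lambda>_. 1) (cb b s)) + real_of_int (int (t div b) * int b * Kc b)"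
      by (simp add: cb_shift algebra_simps)
  qed
  moreover have "real (H t) = (\<Sum>b\<in>{1..t}. real_of_int (int (t div b) * int b * Kc b))"
    using arg_cong[OF H_int, of real_of_int] by simp
  ultimately show ?thesis unfolding VX_def by (simp add: sum.distrib)
qed

lemma VY_shift: "t \<ge> 1 \<Longrightarrow> VY t (s + 1) = VY t s + VX t s + real (H t) / 2"
proof -
  assume t: "t \<ge> 1"
  have "(\<Sum>b\<in>{1..t}. real_of_int (int (t div b) * WW b id (cb b (s+1))))
     = (\<Sum>b\<in>{1..t}. real_of_int (int (t div b) * WW b id (cb b s))
         + real_of_int (int (t div b) * int b * WW b (\<lambda>_. 1) (cb b s))
         + real_of_int (int (t div b) * WW b id (int b))
         - real_of_int (int (t div b) * int b * (if b = 1 then 1 else 0)))"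
  proof (intro sum.cong refl)
    fix b assume b: "b \<in> {1..t}"
    have "WW b id (cb b s + int b) = WW b id (cb b s) + int b * WW b (\<lambda>_. 1) (cb b s) + WW b id (int b) - int b * (if b = 1 then 1 else 0)"
      using WW_F[of b "cb b s"] WW_0[of b] b by auto
    then have "WW b id (cb b (s+1)) = WW b id (cb b s) + int b * WW b (\<lambda>_. 1) (cb b s) + WW b id (int b) - int b * (if b = 1 then 1 else 0)"
      by (simp only: cb_shift)
    then have "int (t div b) * WW b id (cb b (s+1)) = int (t div b) * (WW b id (cb b s) + int b * WW b (\<lambda>_. 1) (cb b s) + WW b id (int b) - int b * (if b = 1 then 1 else 0))"
      by (rule arg_cong)
    then have e: "int (t div b) * WW b id (cb b (s+1)) = int (t div b) * WW b id (cb b s)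
         + int (t div b) * int b * WW b (\<lambda>_. 1) (cb b s)
         + int (t div b) * WW b id (int b)
         - int (t div b) * int b * (if b = 1 then 1 else 0)"
      by (simp only: algebra_simps)
    show "real_of_int (int (t div b) * WW b id (cb b (s+1))) =
         real_of_int (int (t div b) * WW b id (cb b s))
         + real_of_int (int (t div b) * int b * WW b (\<lambda>_. 1) (cb b s))
         + real_of_int (int (t div b) * WW b id (int b))
         - real_of_int (int (t div b) * int b * (if b = 1 then 1 else 0))"
      by (subst e) (simp only: of_int_add of_int_diff)
  qed
  also have "\<dots> = VY t s + (VX t s + real t / 2) + real_of_int (Q t) - real t"
  proof -
    have "(\<Sum>b\<in>{1..t}. real_of_int (int (t div b) * int b * (if b = 1 then 1 else 0))) = real_of_int (int t)"
      using arg_cong[OF sum_ind1[OF t, of "\<lambda>b. int (t div b) * int b"], of real_of_int]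
      by (simp only: of_int_sum) simp
    then show ?thesis unfolding VX_def VY_def Q_def
      by (simp add: sum.distrib sum_subtractf of_int_sum)
  qed
  also have "real_of_int (Q t) = (real (H t) + real t) / 2"
    using arg_cong[OF two_Q[OF t], of real_of_int] by simp
  finally have "VY t (s+1) = VY t s + (VX t s + real t / 2) + (real (H t) + real t) / 2 - real t"
    unfolding VY_def .
  then show ?thesis by (simp add: field_simps)
qed

lemma vertex_shift: "t \<ge> 1 \<Longrightarrow> vertex t (s + 1) = Tmap t (vertex t s)"
  by (simp add: vertex_eq VX_shift VY_shift Tmap_def)

lemma quot_ab': "coprime a b \<Longrightarrow> b > 0 \<Longrightarrow> quotient_of (of_int a / of_int b) = (a, b)"
  using quot_ab[of a "nat b"] by simp

lemma quot_shift: "quotient_of (s + 1) = (fst (quotient_of s) + snd (quotient_of s), snd (quotient_of s))"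
proof -
  obtain a b where q: "quotient_of s = (a, b)" by fastforce
  have b: "b > 0" "coprime a b" using q quotient_of_denom_pos quotient_of_coprime by auto
  have e1: "s + 1 = of_int (a + b) / of_int b" using quotient_of_div[OF q] b by (simp add: field_simps)
  have "coprime (a + b) b" using b by (simp add: coprime_iff_gcd_eq_1)
  then have e2: "quotient_of (of_int (a + b) / of_int b) = (a + b, b)" using b by (intro quot_ab') auto
  show ?thesis by (simp only: e1 e2 q fst_conv snd_conv)
qed

lemma S_shift: "s + 1 \<in> S t \<longleftrightarrow> s \<in> S t"
  by (simp add: S_def quot_shift)

lemma S_image: "(\<lambda>s. s + 1) ` S t = S t"
proof
  show "(\<lambda>s. s + 1) ` S t \<subseteq> S t" using S_shift by auto
  show "S t \<subseteq> (\<lambda>s. s + 1) ` S t"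
  proof
    fix s assume "s \<in> S t"
    then have "s - 1 \<in> S t" using S_shift[of "s - 1" t] by simp
    then show "s \<in> (\<lambda>s. s + 1) ` S t" by (rule rev_image_eqI) simp
  qed
qed

definition Lm :: "real \<times> real \<Rightarrow> real \<times> real" where "Lm = (\<lambda>(x, y). (x, y + x))"

lemma vvec_shift: "vvec t (s + 1) = Lm (vvec t s)"
  unfolding vvec_def quot_shift by (simp add: Lm_def Let_def case_prod_beta algebra_simps)

lemma Lm_linear: "linear Lm"
  unfolding Lm_def by (rule linearI) (auto simp: case_prod_beta algebra_simps)

lemma Tmap_eq: "Tmap t = (\<lambda>p. (real (H t), real (H t) / 2) + p) \<circ> Lm"
  by (auto simp: Tmap_def Lm_def fun_eq_iff)

lemma Tmap_diff: "Tmap t (p - v) = Tmap t p - Lm v"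
  by (simp add: Tmap_eq linear_diff[OF Lm_linear])

lemma Tmap_seg: "Tmap t ` closed_segment a b = closed_segment (Tmap t a) (Tmap t b)"
  unfolding Tmap_eq image_comp[symmetric] closed_segment_linear_image[OF Lm_linear, symmetric]
  by (simp add: closed_segment_translation)

lemma grid_inv: "t \<ge> 1 \<Longrightarrow> Tmap t ` grid_parabola t = grid_parabola t"
proof -
  assume t: "t \<ge> 1"
  let ?seg = "\<lambda>s. closed_segment (vertex t s - vvec t s) (vertex t s)"
  have "Tmap t ` grid_parabola t = (\<Union>s\<in>S t. ?seg (s + 1))"
    unfolding grid_parabola_def image_UN Tmap_seg
    by (simp add: Tmap_diff vertex_shift[OF t] vvec_shift)
  also have "\<dots> = (\<Union>s\<in>(\<lambda>s. s + 1) ` S t. ?seg s)" by simp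
  also have "\<dots> = grid_parabola t" unfolding S_image grid_parabola_def ..
  finally show ?thesis .
qed

lemma H_pos: "t \<ge> 1 \<Longrightarrow> H t > 0"
proof -
  assume t: "t \<ge> 1"
  have Kc_nn: "\<And>b. Kc b \<ge> 0" unfolding Kc_def by (intro sum_nonneg) auto
  have K1: "Kc 1 = 1" unfolding Kc_def by simp
  then have "int (t div 1) * int 1 * Kc 1 \<le> (\<Sum>b\<in>{1..t}. int (t div b) * int b * Kc b)"
    using t by (intro member_le_sum) (auto simp: Kc_nn)
  then have "int t \<le> int (H t)" using H_int[of t] K1 by simp
  then show ?thesis using t by simp
qed

lemma half_H: assumes t: "t \<ge> 1" shows "real (H t) / 2 = real_of_int (Q t) - real t / 2"
proof -
  have "real_of_int (2 * Q t) = real_of_int (int (H t) + int t)" using two_Q[OF t] by simp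
  then show ?thesis by (simp add: field_simps)
qed

lemma lattice_inv: "t \<ge> 1 \<Longrightarrow> Tmap t ` lattice t = lattice t"
proof -
  assume t: "t \<ge> 1"
  note hh = half_H[OF t]
  show ?thesis
  proof
    show "Tmap t ` lattice t \<subseteq> lattice t"
    proof (rule subsetI)
      fix p assume "p \<in> Tmap t ` lattice t"
      then obtain x y where p: "p = Tmap t (x, y)" and "(x, y) \<in> lattice t" by auto
      then obtain k j where k: "x - real t / 2 = of_int k" and j: "y = of_int j"
        unfolding lattice_def by (auto elim!: Ints_cases)
      have "x + real (H t) - real t / 2 = of_int k + of_int (int (H t))" using k by simp
      then have "x + real (H t) - real t / 2 \<in> \<int>" by (metis Ints_add Ints_of_int)
      moreover have "y + x + real (H t) / 2 = of_int j + of_int k + of_int (Q t)" using k j hh by linarith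
      then have "y + x + real (H t) / 2 \<in> \<int>" by (metis Ints_add Ints_of_int)
      ultimately show "p \<in> lattice t" unfolding p lattice_def Tmap_def by simp
    qed
    show "lattice t \<subseteq> Tmap t ` lattice t"
    proof (rule subsetI)
      fix p assume "p \<in> lattice t"
      then obtain x y where p: "p = (x, y)" and "(x, y) \<in> lattice t" by (cases p) auto
      then obtain k j where k: "x - real t / 2 = of_int k" and j: "y = of_int j"
        unfolding lattice_def by (auto elim!: Ints_cases)
      have "x - real (H t) - real t / 2 = of_int k - of_int (int (H t))" using k by simp
      then have "x - real (H t) - real t / 2 \<in> \<int>" by (metis Ints_diff Ints_of_int)
      moreover have "y - x + real (H t) / 2 = of_int j - of_int k + of_int (Q t) - of_int (int t)" using k j hh by linarith
      then have "y - x + real (H t) / 2 \<in> \<int>" by (metis Ints_add Ints_diff Ints_of_int)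
      ultimately have "(x - real (H t), y - x + real (H t) / 2) \<in> lattice t" unfolding lattice_def by simp
      moreover have "Tmap t (x - real (H t), y - x + real (H t) / 2) = (x, y)" unfolding Tmap_def by simp
      ultimately show "p \<in> Tmap t ` lattice t" unfolding p by (metis image_eqI)
    qed
  qed
qed

lemma parab_inv: "t \<ge> 1 \<Longrightarrow> Tmap t ` ref_parabola t c = ref_parabola t c"
proof -
  assume t: "t \<ge> 1"
  have Hp: "real (H t) > 0" using H_pos[OF t] by simp
  show ?thesis
  proof
    show "Tmap t ` ref_parabola t c \<subseteq> ref_parabola t c"
      using Hp by (auto simp: ref_parabola_def Tmap_def field_simps power2_eq_square)
    show "ref_parabola t c \<subseteq> Tmap t ` ref_parabola t c"
    proof (rule subsetI)
      fix p assume "p \<in> ref_parabola t c"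
      then obtain x y where p: "p = (x, y)" and xy: "(x, y) \<in> ref_parabola t c" by (cases p) auto
      have "(x - real (H t), y - x + real (H t) / 2) \<in> ref_parabola t c"
        using xy Hp by (auto simp: ref_parabola_def field_simps power2_eq_square)
      moreover have "Tmap t (x - real (H t), y - x + real (H t) / 2) = (x, y)" unfolding Tmap_def by simp
      ultimately show "p \<in> Tmap t ` ref_parabola t c" unfolding p by (metis image_eqI)
    qed
  qed
qed

theorem lemma1:
  fixes t :: nat
  assumes "t \<ge> 1"
  shows "Tmap t ` lattice t = lattice t
       \<and> Tmap t ` grid_parabola t = grid_parabola t
       \<and> (\<forall>c::real. Tmap t ` ref_parabola t c = ref_parabola t c)"
  using lattice_inv[OF assms] grid_inv[OF assms] parab_inv[OF assms] by blast


end
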